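(* Let $A\subseteq[n]^2$, let $\Gamma=\Gamma(A)$ be the gate defined below, and let $x\in\{0,1\}^{4n}$ satisfy $\varphi_{one}(x)$. (i) If $x_W\ne x_E$ or $\mathrm{hw}(x_S)\ne1$, then $\mathrm{Sig}(\Gamma,x)=0$. (ii) If $\varphi_{prop}(x)$ holds, let $u=x_W$, $v=x_N$. Then $\mathrm{Sig}(\Gamma,x)=q_u-r_{u,v}-s_{u,v}-\alpha_{u,v}-\beta_{u,v}$ if $(u,v)\notin A$, and $\mathrm{Sig}(\Gamma,x)=q_u-r_{u,v}-s_{u,v}+1$ if $(u,v)\in A$. (iii) If $x_W=x_E$, $\mathrm{hw}(x_S)=1$ and $x_N\ne x_S$, let $u=x_W$, $v=x_N$, $w=x_S$. Then $\mathrm{Sig}(\Gamma,x)$ equals $p_{u,v,w}$ if $(u,v)\notin A,(u,w)\notin A$; $p_{u,v,w}+\alpha_{u,v}-\beta_{u,v}$ if $(u,v)\notin A,(u,w)\in A$; $p_{u,v,w}+\beta_{u,w}-\alpha_{u,w}$ if $(u,v)\in A,(u,w)\notin A$; and $p_{u,v,w}+\beta_{u,w}-\alpha_{u,w}+\alpha_{u,v}-\beta_{u,v}+1$ if $(u,v)\in A,(u,w)\in A$.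
   Context: $\Gamma(A)$: vertices $b_{i,j}$, $(i,j)\in[n]^2$, with the south edge of $b_{i,j}$ equal to the north edge of $b_{i+1,j}$ and the east edge of $b_{i,j}$ equal to the west edge of $b_{i,j+1}$; $4n$ dangling edges ordered as north edges of row $1$ (columns $1..n$), east edges of column $n$ (rows $1..n$), south edges of row $n$, west edges of column $1$; $x=x_Nx_Ex_Sx_W$ accordingly, and a weight-one string $0^{v-1}10^{n-v}\in\{0,1\}^n$ is identified with $v\in[n]$. Two apices $a_1,a_2$ with signature $\mathtt{HW}_{=1}$ (value $1$ iff exactly one incident edge active). For $\tau\notin A$, $b_\tau$ has signature $\mathtt{PASS}$; for $\tau\in A$, $b_\tau$ is also joined to $a_1$ and $a_2$ (its 5th and 6th edges) and has signature $\mathtt{PRE}$. All edge weights $1$. For $x\in\{0,1\}^4$ ordered north, east, south, west: $\mathtt{PASS}(1111)=-1$, $\mathtt{PASS}(0000)=\mathtt{PASS}(0101)=\mathtt{PASS}(1010)=1$, else $0$. For $x\in\{0,1\}^4,y\in\{0,1\}^2$: $\mathtt{PRE}(x00)=\mathtt{PASS}(x)$; $\mathtt{PRE}(xy)=1$ for $xy\in\{101011,111111,100001,110101,001010,011110\}$; else $0$. $\varphi_{one}(x)\equiv\mathrm{hw}(x_N)=\mathrm{hw}(x_W)=1$; $\varphi_{prop}(x)\equiv x_N=x_S\wedge x_W=x_E$. For $u,v\in[n]$: $\alpha_{u,v}=|A\cap\{(1,v),\dots,(u-1,v)\}|$, $\beta_{u,v}=|A\cap\{(u+1,v),\dots,(n,v)\}|$;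 $q_u=\sum_{z\in[n]}\big(\alpha_{u,z}\beta_{u,z}-\binom{\alpha_{u,z}}2-\binom{\beta_{u,z}}2\big)$; $p_{u,v,w}=(\alpha_{u,v}-\beta_{u,v})(\beta_{u,w}-\alpha_{u,w})$; $r_{u,v}=\sum_{z\in[n]\setminus\{v\},(u,z)\in A}\beta_{u,z}$; $s_{u,v}=\sum_{z\in[n]\setminus\{v\},(u,z)\in A}\alpha_{u,z}$. $\mathrm{Sig}(\Gamma,x)=\sum_y w_\Gamma(xy)\prod_v f_v((xy)|_{I(v)})$ over assignments $y$ to the non-dangling edges. *)

theory Defs
  imports Main "HOL-Library.FuncSet"
begin

text \<open>Signatures. Argument order: north, east, south, west (then the two apex edges).\<close>

definition PASS :: "bool \<Rightarrow> bool \<Rightarrow> bool \<Rightarrow> bool \<Rightarrow> int" where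
  "PASS N E S W =
     (if N \<and> E \<and> S \<and> W then -1
      else if (\<not>N \<and> \<not>E \<and> \<not>S \<and> \<not>W) \<or> (\<not>N \<and> E \<and> \<not>S \<and> W) \<or> (N \<and> \<not>E \<and> S \<and> \<not>W) then 1
      else 0)"

definition PRE :: "bool \<Rightarrow> bool \<Rightarrow> bool \<Rightarrow> bool \<Rightarrow> bool \<Rightarrow> bool \<Rightarrow> int" where
  "PRE N E S W Y1 Y2 =
     (if \<not>Y1 \<and> \<not>Y2 then PASS N E S W
      else if [N,E,S,W,Y1,Y2] \<in> {[True,False,True,False,True,True],
                                  [True,True,True,True,True,True],
                                  [True,False,False,False,False,True],
                                  [True,True,False,True,False,True],
                                  [False,False,True,False,True,False],
                                  [False,True,True,True,True,False]} then 1
      else 0)"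

definition hw :: "bool list \<Rightarrow> nat" where
  "hw l = length (filter id l)"

definition onepos :: "bool list \<Rightarrow> nat" where
  "onepos l = Suc (LEAST i. i < length l \<and> l ! i)"

definition xN :: "nat \<Rightarrow> bool list \<Rightarrow> bool list" where "xN n x = take n x"
definition xE :: "nat \<Rightarrow> bool list \<Rightarrow> bool list" where "xE n x = take n (drop n x)"
definition xS :: "nat \<Rightarrow> bool list \<Rightarrow> bool list" where "xS n x = take n (drop (2*n) x)"
definition xW :: "nat \<Rightarrow> bool list \<Rightarrow> bool list" where "xW n x = take n (drop (3*n) x)"

text \<open>Non-dangling edges of Gamma(A):
  Vt i j : south edge of b_{i,j} = north edge of b_{i+1,j}   (1 \<le> i < n)
  Hz i j : east edge of b_{i,j} = west edge of b_{i,j+1}      (1 \<le> j < n)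
  Ap1 i j, Ap2 i j : edges from b_{i,j} to a_1, a_2           ((i,j) \<in> A)\<close>

datatype edge = Vt nat nat | Hz nat nat | Ap1 nat nat | Ap2 nat nat

definition inner_edges :: "nat \<Rightarrow> (nat \<times> nat) set \<Rightarrow> edge set" where
  "inner_edges n A =
     {Vt i j | i j. i \<in> {1..<n} \<and> j \<in> {1..n}} \<union>
     {Hz i j | i j. i \<in> {1..n} \<and> j \<in> {1..<n}} \<union>
     {Ap1 i j | i j. (i,j) \<in> A} \<union> {Ap2 i j | i j. (i,j) \<in> A}"

definition nedge :: "nat \<Rightarrow> bool list \<Rightarrow> (edge \<Rightarrow> bool) \<Rightarrow> nat \<Rightarrow> nat \<Rightarrow> bool" where
  "nedge n x y i j = (if i = 1 then xN n x ! (j-1) else y (Vt (i-1) j))"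
definition sedge :: "nat \<Rightarrow> bool list \<Rightarrow> (edge \<Rightarrow> bool) \<Rightarrow> nat \<Rightarrow> nat \<Rightarrow> bool" where
  "sedge n x y i j = (if i = n then xS n x ! (j-1) else y (Vt i j))"
definition wedge :: "nat \<Rightarrow> bool list \<Rightarrow> (edge \<Rightarrow> bool) \<Rightarrow> nat \<Rightarrow> nat \<Rightarrow> bool" where
  "wedge n x y i j = (if j = 1 then xW n x ! (i-1) else y (Hz i (j-1)))"
definition eedge :: "nat \<Rightarrow> bool list \<Rightarrow> (edge \<Rightarrow> bool) \<Rightarrow> nat \<Rightarrow> nat \<Rightarrow> bool" where
  "eedge n x y i j = (if j = n then xE n x ! (i-1) else y (Hz i j))"

definition vertex_val :: "nat \<Rightarrow> (nat \<times> nat) set \<Rightarrow> bool list \<Rightarrow> (edge \<Rightarrow> bool) \<Rightarrow> nat \<Rightarrow> nat \<Rightarrow> int" where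
  "vertex_val n A x y i j =
     (if (i,j) \<in> A
      then PRE (nedge n x y i j) (eedge n x y i j) (sedge n x y i j) (wedge n x y i j)
               (y (Ap1 i j)) (y (Ap2 i j))
      else PASS (nedge n x y i j) (eedge n x y i j) (sedge n x y i j) (wedge n x y i j))"

definition apex1_val :: "(nat \<times> nat) set \<Rightarrow> (edge \<Rightarrow> bool) \<Rightarrow> int" where
  "apex1_val A y = (if card {\<tau> \<in> A. y (Ap1 (fst \<tau>) (snd \<tau>))} = 1 then 1 else 0)"
definition apex2_val :: "(nat \<times> nat) set \<Rightarrow> (edge \<Rightarrow> bool) \<Rightarrow> int" where
  "apex2_val A y = (if card {\<tau> \<in> A. y (Ap2 (fst \<tau>) (snd \<tau>))} = 1 then 1 else 0)"

text \<open>Sig(Gamma(A), x): sum over assignments to the non-dangling edges (all edge weights 1).\<close>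
definition SigGamma :: "nat \<Rightarrow> (nat \<times> nat) set \<Rightarrow> bool list \<Rightarrow> int" where
  "SigGamma n A x =
     (\<Sum>y \<in> Pi\<^sub>E (inner_edges n A) (\<lambda>_. UNIV).
        (\<Prod>i\<in>{1..n}. \<Prod>j\<in>{1..n}. vertex_val n A x y i j) * apex1_val A y * apex2_val A y)"

definition alpha :: "nat \<Rightarrow> (nat \<times> nat) set \<Rightarrow> nat \<Rightarrow> nat \<Rightarrow> int" where
  "alpha n A u v = int (card {k \<in> {1..<u}. (k,v) \<in> A})"
definition beta :: "nat \<Rightarrow> (nat \<times> nat) set \<Rightarrow> nat \<Rightarrow> nat \<Rightarrow> int" where
  "beta n A u v = int (card {k \<in> {u<..n}. (k,v) \<in> A})"
definition qq :: "nat \<Rightarrow> (nat \<times> nat) set \<Rightarrow> nat \<Rightarrow> int" where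
  "qq n A u = (\<Sum>z\<in>{1..n}. alpha n A u z * beta n A u z
      - int (nat (alpha n A u z) choose 2) - int (nat (beta n A u z) choose 2))"
definition pp :: "nat \<Rightarrow> (nat \<times> nat) set \<Rightarrow> nat \<Rightarrow> nat \<Rightarrow> nat \<Rightarrow> int" where
  "pp n A u v w = (alpha n A u v - beta n A u v) * (beta n A u w - alpha n A u w)"
definition rr :: "nat \<Rightarrow> (nat \<times> nat) set \<Rightarrow> nat \<Rightarrow> nat \<Rightarrow> int" where
  "rr n A u v = (\<Sum>z \<in> {z \<in> {1..n} - {v}. (u,z) \<in> A}. beta n A u z)"
definition ss :: "nat \<Rightarrow> (nat \<times> nat) set \<Rightarrow> nat \<Rightarrow> nat \<Rightarrow> int" where
  "ss n A u v = (\<Sum>z \<in> {z \<in> {1..n} - {v}. (u,z) \<in> A}. alpha n A u z)"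

end

theory Submission
  imports Defs
begin


lemma PRE_eq: "PRE N E S W a b = (if E = W \<and> S = ((N \<noteq> a) \<noteq> b) \<and> ((a \<or> b) \<longrightarrow> N = b)
   then (if W \<and> N \<and> \<not> a \<and> \<not> b then -1 else 1) else 0)"
  by (cases N; cases E; cases S; cases W; cases a; cases b; simp add: PRE_def PASS_def)

lemma PASS_eq: "PASS N E S W = (if E = W \<and> S = N then (if W \<and> N then -1 else 1) else 0)"
  by (cases N; cases E; cases S; cases W; simp add: PASS_def)



definition col :: "nat \<Rightarrow> bool list \<Rightarrow> nat\<times>nat \<Rightarrow> nat\<times>nat \<Rightarrow> nat \<Rightarrow> nat \<Rightarrow> bool" where
 "col n x t1 t2 i j = ((xN n x ! (j-1) \<noteq> (snd t1 = j \<and> fst t1 < i)) \<noteq> (snd t2 = j \<and> fst t2 < i))"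

definition Ycan :: "nat \<Rightarrow> (nat\<times>nat) set \<Rightarrow> bool list \<Rightarrow> nat\<times>nat \<Rightarrow> nat\<times>nat \<Rightarrow> edge \<Rightarrow> bool" where
 "Ycan n A x t1 t2 e = (if e \<in> inner_edges n A then (case e of Vt i j \<Rightarrow> col n x t1 t2 (Suc i) j
     | Hz i j \<Rightarrow> xW n x ! (i-1) | Ap1 i j \<Rightarrow> (i,j) = t1 | Ap2 i j \<Rightarrow> (i,j) = t2) else undefined)"

lemma col_step: "col n x t1 t2 (Suc i) j = ((col n x t1 t2 i j \<noteq> ((i,j)=t1)) \<noteq> ((i,j)=t2))"
  by (cases t1; cases t2; auto simp: col_def less_Suc_eq)

lemma col_one: "fst t1 \<ge> 1 \<Longrightarrow> fst t2 \<ge> 1 \<Longrightarrow> col n x t1 t2 1 j = (xN n x ! (j-1))"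
  by (auto simp: col_def)

lemma inner_Vt[simp]: "Vt i j \<in> inner_edges n A \<longleftrightarrow> i \<in> {1..<n} \<and> j \<in> {1..n}"
  by (auto simp: inner_edges_def)
lemma inner_Hz[simp]: "Hz i j \<in> inner_edges n A \<longleftrightarrow> i \<in> {1..n} \<and> j \<in> {1..<n}"
  by (auto simp: inner_edges_def)
lemma inner_Ap1[simp]: "Ap1 i j \<in> inner_edges n A \<longleftrightarrow> (i,j) \<in> A"
  by (auto simp: inner_edges_def)
lemma inner_Ap2[simp]: "Ap2 i j \<in> inner_edges n A \<longleftrightarrow> (i,j) \<in> A"
  by (auto simp: inner_edges_def)

lemma finite_inner: assumes "finite A" shows "finite (inner_edges n A)"
proof -
  have "inner_edges n A \<subseteq> (\<lambda>(i,j). Vt i j) ` ({..n}\<times>{..n}) \<union> (\<lambda>(i,j). Hz i j) ` ({..n}\<times>{..n})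
     \<union> (\<lambda>(i,j). Ap1 i j) ` A \<union> (\<lambda>(i,j). Ap2 i j) ` A"
    by (auto simp: inner_edges_def image_iff)
  moreover have "finite ((\<lambda>(i,j). Vt i j) ` ({..n}\<times>{..n}) \<union> (\<lambda>(i,j). Hz i j) ` ({..n}\<times>{..n})
     \<union> (\<lambda>(i,j). Ap1 i j) ` A \<union> (\<lambda>(i,j). Ap2 i j) ` A)" using assms by auto
  ultimately show ?thesis by (rule finite_subset)
qed

lemma vv_eq:
  assumes "(i,j) \<in> A \<Longrightarrow> y (Ap1 i j) = ((i,j)=t1)" "(i,j) \<in> A \<Longrightarrow> y (Ap2 i j) = ((i,j)=t2)"
    "t1 \<in> A" "t2 \<in> A"
  shows "vertex_val n A x y i j =
    (if eedge n x y i j = wedge n x y i j \<and> sedge n x y i j = ((nedge n x y i j \<noteq> ((i,j)=t1)) \<noteq> ((i,j)=t2))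
        \<and> (((i,j)=t1 \<or> (i,j)=t2) \<longrightarrow> nedge n x y i j = ((i,j)=t2))
     then (if wedge n x y i j \<and> nedge n x y i j \<and> (i,j) \<noteq> t1 \<and> (i,j) \<noteq> t2 then -1 else 1) else 0)"
proof (cases "(i,j) \<in> A")
  case True
  then show ?thesis using assms by (simp add: vertex_val_def PRE_eq)
next
  case False
  then have "(i,j) \<noteq> t1" "(i,j) \<noteq> t2" using assms by auto
  then show ?thesis using False by (simp add: vertex_val_def PASS_eq)
qed



lemma prod_nz_grid:
  assumes "(\<Prod>i\<in>{1..n::nat}. \<Prod>j\<in>{1..n}. (f i j::int)) \<noteq> 0" "i \<in> {1..n}" "j \<in> {1..n}"
  shows "f i j \<noteq> 0"
  using assms by (auto simp: prod_zero_iff)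

lemma if_nz: "(if C then a else (0::int)) \<noteq> 0 \<Longrightarrow> C" by (cases C) auto

lemma vv_nz:
  assumes "(i,j) \<in> A \<Longrightarrow> y (Ap1 i j) = ((i,j)=t1)" "(i,j) \<in> A \<Longrightarrow> y (Ap2 i j) = ((i,j)=t2)"
    "t1 \<in> A" "t2 \<in> A" "vertex_val n A x y i j \<noteq> 0"
  shows "eedge n x y i j = wedge n x y i j \<and> sedge n x y i j = ((nedge n x y i j \<noteq> ((i,j)=t1)) \<noteq> ((i,j)=t2))
        \<and> (((i,j)=t1 \<or> (i,j)=t2) \<longrightarrow> nedge n x y i j = ((i,j)=t2))"
proof (rule if_nz)
  have e: "vertex_val n A x y i j = (if eedge n x y i j = wedge n x y i j \<and> sedge n x y i j = ((nedge n x y i j \<noteq> ((i,j)=t1)) \<noteq> ((i,j)=t2))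
        \<and> (((i,j)=t1 \<or> (i,j)=t2) \<longrightarrow> nedge n x y i j = ((i,j)=t2))
     then (if wedge n x y i j \<and> nedge n x y i j \<and> (i,j) \<noteq> t1 \<and> (i,j) \<noteq> t2 then -1 else 1) else 0)"
    (is "_ = ?R") by (rule vv_eq[OF assms(1-4)])
  show "?R \<noteq> 0" using e assms(5) by (rule subst[where P="\<lambda>z. z \<noteq> 0"])
qed

lemma nz_form:
  assumes hA: "A \<subseteq> {1..n}\<times>{1..n}" and y: "y \<in> PiE (inner_edges n A) (\<lambda>_. UNIV)"
    and nz: "(\<Prod>i\<in>{1..n}. \<Prod>j\<in>{1..n}. vertex_val n A x y i j) * apex1_val A y * apex2_val A y \<noteq> 0"
  shows "\<exists>t1\<in>A. \<exists>t2\<in>A. y = Ycan n A x t1 t2"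
proof -
  have "card {\<tau>\<in>A. y (Ap1 (fst \<tau>) (snd \<tau>))} = 1" using nz by (auto simp: apex1_val_def split: if_splits)
  then obtain t1 where T1: "{\<tau>\<in>A. y (Ap1 (fst \<tau>) (snd \<tau>))} = {t1}" by (rule card_1_singletonE)
  have "card {\<tau>\<in>A. y (Ap2 (fst \<tau>) (snd \<tau>))} = 1" using nz by (auto simp: apex2_val_def split: if_splits)
  then obtain t2 where T2: "{\<tau>\<in>A. y (Ap2 (fst \<tau>) (snd \<tau>))} = {t2}" by (rule card_1_singletonE)
  have t1A: "t1 \<in> A" using T1 by blast
  have t2A: "t2 \<in> A" using T2 by blast
  have ap1: "y (Ap1 i j) = ((i,j)=t1)" if "(i,j) \<in> A" for i j
  proof -
    have "(i,j) \<in> {\<tau>\<in>A. y (Ap1 (fst \<tau>) (snd \<tau>))} \<longleftrightarrow> (i,j) \<in> {t1}" using T1 by simp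
    then show ?thesis using that by simp
  qed
  have ap2: "y (Ap2 i j) = ((i,j)=t2)" if "(i,j) \<in> A" for i j
  proof -
    have "(i,j) \<in> {\<tau>\<in>A. y (Ap2 (fst \<tau>) (snd \<tau>))} \<longleftrightarrow> (i,j) \<in> {t2}" using T2 by simp
    then show ?thesis using that by simp
  qed
  have P: "(\<Prod>i\<in>{1..n}. \<Prod>j\<in>{1..n}. vertex_val n A x y i j) \<noteq> 0" using nz by auto
  have loc: "eedge n x y i j = wedge n x y i j \<and> sedge n x y i j = ((nedge n x y i j \<noteq> ((i,j)=t1)) \<noteq> ((i,j)=t2))"
    if "i \<in> {1..n}" "j \<in> {1..n}" for i j
  proof -
    have nzv: "vertex_val n A x y i j \<noteq> 0" using prod_nz_grid[OF P that] .
    have "eedge n x y i j = wedge n x y i j \<and> sedge n x y i j = ((nedge n x y i j \<noteq> ((i,j)=t1)) \<noteq> ((i,j)=t2))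
        \<and> (((i,j)=t1 \<or> (i,j)=t2) \<longrightarrow> nedge n x y i j = ((i,j)=t2))" by (rule vv_nz[OF ap1[of i j] ap2[of i j] t1A t2A nzv])
    then show ?thesis by blast
  qed
  have hz: "wedge n x y i j = xW n x ! (i-1)" if "i \<in> {1..n}" "1 \<le> j" "j \<le> n" for i j
    using that(2,3)
  proof (induction j)
    case 0 then show ?case by simp
  next
    case (Suc j)
    show ?case
    proof (cases "j = 0")
      case True then show ?thesis by (simp add: wedge_def)
    next
      case False
      then have "wedge n x y i (Suc j) = y (Hz i j)" by (simp add: wedge_def)
      also have "\<dots> = eedge n x y i j" using Suc.prems by (simp add: eedge_def)
      also have "\<dots> = wedge n x y i j" using loc[of i j] that Suc.prems False by auto
      also have "\<dots> = xW n x ! (i-1)" using Suc False by auto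
      finally show ?thesis .
    qed
  qed
  have c1: "fst t1 \<ge> 1" "fst t2 \<ge> 1" using subsetD[OF hA t1A] subsetD[OF hA t2A] by (auto simp: mem_Times_iff)
  have vt: "nedge n x y i j = col n x t1 t2 i j" if "j \<in> {1..n}" "1 \<le> i" "i \<le> n" for i j
    using that(2,3)
  proof (induction i)
    case 0 then show ?case by simp
  next
    case (Suc i)
    show ?case
    proof (cases "i = 0")
      case True then show ?thesis using col_one[OF c1] by (simp add: nedge_def)
    next
      case False
      then have "nedge n x y (Suc i) j = y (Vt i j)" by (simp add: nedge_def)
      also have "\<dots> = sedge n x y i j" using Suc.prems by (simp add: sedge_def)
      also have "\<dots> = ((nedge n x y i j \<noteq> ((i,j)=t1)) \<noteq> ((i,j)=t2))" using loc[of i j] that Suc.prems False by auto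
      also have "\<dots> = col n x t1 t2 (Suc i) j" using Suc False by (simp add: col_step)
      finally show ?thesis .
    qed
  qed
  have "y = Ycan n A x t1 t2"
  proof
    fix e
    show "y e = Ycan n A x t1 t2 e"
    proof (cases "e \<in> inner_edges n A")
      case False
      have "y e = undefined" using y False by (rule PiE_arb)
      then show ?thesis using False by (simp add: Ycan_def)
    next
      case True
      show ?thesis
      proof (cases e)
        case (Vt i j)
        then have ij: "i \<in> {1..<n}" "j \<in> {1..n}" using True by auto
        have "y (Vt i j) = sedge n x y i j" using ij by (simp add: sedge_def)
        also have "\<dots> = ((nedge n x y i j \<noteq> ((i,j)=t1)) \<noteq> ((i,j)=t2))" using loc[of i j] ij by auto
        also have "\<dots> = col n x t1 t2 (Suc i) j" using vt[of j i] ij by (simp add: col_step)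
        finally show ?thesis using Vt True by (simp add: Ycan_def)
      next
        case (Hz i j)
        then have ij: "i \<in> {1..n}" "j \<in> {1..<n}" using True by auto
        have "y (Hz i j) = eedge n x y i j" using ij by (simp add: eedge_def)
        also have "\<dots> = wedge n x y i j" using loc[of i j] ij by auto
        also have "\<dots> = xW n x ! (i-1)" using hz[of i j] ij by auto
        finally show ?thesis using Hz True by (simp add: Ycan_def)
      next
        case (Ap1 i j)
        then have ij: "(i,j) \<in> A" using True by simp
        have "y e = ((i,j) = t1)" using ap1[OF ij] Ap1 by simp
        moreover have "Ycan n A x t1 t2 e = ((i,j) = t1)" using ij Ap1 by (simp add: Ycan_def)
        ultimately show ?thesis by simp
      next
        case (Ap2 i j)
        then have ij: "(i,j) \<in> A" using True by simp
        have "y e = ((i,j) = t2)" using ap2[OF ij] Ap2 by simp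
        moreover have "Ycan n A x t1 t2 e = ((i,j) = t2)" using ij Ap2 by (simp add: Ycan_def)
        ultimately show ?thesis by simp
      qed
    qed
  qed
  then show ?thesis using t1A t2A by blast
qed

lemma Ycan_PiE: "Ycan n A x t1 t2 \<in> PiE (inner_edges n A) (\<lambda>_. UNIV)"
  by (auto simp: PiE_def extensional_def Ycan_def)

lemma Ycan_apex1: assumes "t1 \<in> A" shows "apex1_val A (Ycan n A x t1 t2) = 1"
proof -
  have "{\<tau>\<in>A. Ycan n A x t1 t2 (Ap1 (fst \<tau>) (snd \<tau>))} = {t1}" using assms by (auto simp: Ycan_def)
  then show ?thesis by (simp add: apex1_val_def)
qed

lemma Ycan_apex2: assumes "t2 \<in> A" shows "apex2_val A (Ycan n A x t1 t2) = 1"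
proof -
  have "{\<tau>\<in>A. Ycan n A x t1 t2 (Ap2 (fst \<tau>) (snd \<tau>))} = {t2}" using assms by (auto simp: Ycan_def)
  then show ?thesis by (simp add: apex2_val_def)
qed

lemma Ycan_inj: "inj_on (\<lambda>(t1,t2). Ycan n A x t1 t2) (A \<times> A)"
proof (rule inj_onI)
  fix p q assume m: "p \<in> A\<times>A" "q \<in> A\<times>A"
    and eq: "(\<lambda>(t1,t2). Ycan n A x t1 t2) p = (\<lambda>(t1,t2). Ycan n A x t1 t2) q"
  obtain a b c d where p: "p = ((a,b),(c,d))" by (metis prod.collapse)
  obtain a' b' c' d' where q: "q = ((a',b'),(c',d'))" by (metis prod.collapse)
  have eq': "Ycan n A x (a,b) (c,d) = Ycan n A x (a',b') (c',d')" using eq p q by simp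
  have "Ycan n A x (a,b) (c,d) (Ap1 a b) = Ycan n A x (a',b') (c',d') (Ap1 a b)" using eq' by simp
  then have 1: "(a,b) = (a',b')" using m p by (simp add: Ycan_def)
  have "Ycan n A x (a,b) (c,d) (Ap2 c d) = Ycan n A x (a',b') (c',d') (Ap2 c d)" using eq' by simp
  then have 2: "(c,d) = (c',d')" using m p by (simp add: Ycan_def)
  show "p = q" using 1 2 p q by simp
qed

definition FF :: "nat \<Rightarrow> (nat\<times>nat) set \<Rightarrow> bool list \<Rightarrow> nat\<times>nat \<Rightarrow> nat\<times>nat \<Rightarrow> int" where
  "FF n A x t1 t2 = (\<Prod>i\<in>{1..n}. \<Prod>j\<in>{1..n}. vertex_val n A x (Ycan n A x t1 t2) i j)"

lemma core:
  assumes hA: "A \<subseteq> {1..n}\<times>{1..n}"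
  shows "SigGamma n A x = (\<Sum>t1\<in>A. \<Sum>t2\<in>A. FF n A x t1 t2)"
proof -
  have fA: "finite A" using hA finite_subset by blast
  let ?P = "PiE (inner_edges n A) (\<lambda>_::edge. UNIV :: bool set)"
  let ?g = "\<lambda>y. (\<Prod>i\<in>{1..n}. \<Prod>j\<in>{1..n}. vertex_val n A x y i j) * apex1_val A y * apex2_val A y"
  let ?Y = "(\<lambda>(t1,t2). Ycan n A x t1 t2) ` (A \<times> A)"
  have fP: "finite ?P" using finite_inner[OF fA] by (simp add: finite_PiE)
  have sub: "?Y \<subseteq> ?P"
  proof (rule image_subsetI)
    fix p assume "p \<in> A \<times> A"
    show "(\<lambda>(t1,t2). Ycan n A x t1 t2) p \<in> ?P" by (cases p) (simp only: case_prod_conv Ycan_PiE)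
  qed
  have z: "\<forall>y\<in>?P - ?Y. ?g y = 0"
  proof
    fix y assume "y \<in> ?P - ?Y"
    then show "?g y = 0" using nz_form[OF hA, of y x] by blast
  qed
  have "SigGamma n A x = sum ?g ?P" by (simp add: SigGamma_def)
  also have "\<dots> = sum ?g ?Y" using sum.mono_neutral_right[OF fP sub z] by simp
  also have "\<dots> = sum (?g \<circ> (\<lambda>(t1,t2). Ycan n A x t1 t2)) (A \<times> A)" using sum.reindex[OF Ycan_inj] by blast
  also have "\<dots> = (\<Sum>(t1,t2)\<in>A\<times>A. FF n A x t1 t2)"
    by (rule sum.cong) (auto simp: FF_def Ycan_apex1 Ycan_apex2)
  also have "\<dots> = (\<Sum>t1\<in>A. \<Sum>t2\<in>A. FF n A x t1 t2)" by (simp add: sum.cartesian_product)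
  finally show ?thesis .
qed



definition Valid :: "nat \<Rightarrow> bool list \<Rightarrow> nat\<times>nat \<Rightarrow> nat\<times>nat \<Rightarrow> bool" where
  "Valid n x t1 t2 = ((\<forall>i\<in>{1..n}. xE n x!(i-1) = xW n x!(i-1))
     \<and> (\<forall>j\<in>{1..n}. xS n x!(j-1) = col n x t1 t2 (Suc n) j)
     \<and> (t1 \<noteq> t2 \<longrightarrow> \<not> col n x t1 t2 (fst t1) (snd t1) \<and> col n x t1 t2 (fst t2) (snd t2))
     \<and> (t1 = t2 \<longrightarrow> col n x t1 t2 (fst t1) (snd t1)))"

definition sg :: "nat \<Rightarrow> bool list \<Rightarrow> nat\<times>nat \<Rightarrow> nat\<times>nat \<Rightarrow> nat \<Rightarrow> nat \<Rightarrow> int" where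
  "sg n x t1 t2 i j = (if xW n x!(i-1) \<and> col n x t1 t2 i j \<and> (i,j)\<noteq>t1 \<and> (i,j)\<noteq>t2 then -1 else 1)"

lemma ycan_edges:
  assumes hA: "A \<subseteq> {1..n}\<times>{1..n}" and t: "t1 \<in> A" "t2 \<in> A" and ij: "i \<in> {1..n}" "j \<in> {1..n}"
  shows "nedge n x (Ycan n A x t1 t2) i j = col n x t1 t2 i j"
    "sedge n x (Ycan n A x t1 t2) i j = (if i = n then xS n x!(j-1) else col n x t1 t2 (Suc i) j)"
    "wedge n x (Ycan n A x t1 t2) i j = xW n x!(i-1)"
    "eedge n x (Ycan n A x t1 t2) i j = (if j = n then xE n x!(i-1) else xW n x!(i-1))"
proof -
  have c1: "fst t1 \<ge> 1" "fst t2 \<ge> 1" using subsetD[OF hA t(1)] subsetD[OF hA t(2)] by (auto simp: mem_Times_iff)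
  show "nedge n x (Ycan n A x t1 t2) i j = col n x t1 t2 i j"
  proof (cases "i = 1")
    case True then show ?thesis using col_one[OF c1] by (simp add: nedge_def)
  next
    case False
    then have "Vt (i-1) j \<in> inner_edges n A" using ij by auto
    then show ?thesis using False ij by (simp add: nedge_def Ycan_def)
  qed
  show "sedge n x (Ycan n A x t1 t2) i j = (if i = n then xS n x!(j-1) else col n x t1 t2 (Suc i) j)"
    using ij by (simp add: sedge_def Ycan_def)
  show "wedge n x (Ycan n A x t1 t2) i j = xW n x!(i-1)"
  proof (cases "j = 1")
    case True then show ?thesis by (simp add: wedge_def)
  next
    case False
    then have "Hz i (j-1) \<in> inner_edges n A" using ij by auto
    then show ?thesis using False ij by (simp add: wedge_def Ycan_def)
  qed
  show "eedge n x (Ycan n A x t1 t2) i j = (if j = n then xE n x!(i-1) else xW n x!(i-1))"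
    using ij by (simp add: eedge_def Ycan_def)
qed

lemma ycan_ap:
  assumes "(i,j) \<in> A"
  shows "Ycan n A x t1 t2 (Ap1 i j) = ((i,j)=t1)" "Ycan n A x t1 t2 (Ap2 i j) = ((i,j)=t2)"
  using assms by (simp_all add: Ycan_def)

lemma vv_ycan:
  assumes hA: "A \<subseteq> {1..n}\<times>{1..n}" and t: "t1 \<in> A" "t2 \<in> A" and ij: "i \<in> {1..n}" "j \<in> {1..n}"
  shows "vertex_val n A x (Ycan n A x t1 t2) i j =
    (if (if j = n then xE n x!(i-1) else xW n x!(i-1)) = xW n x!(i-1)
        \<and> (if i = n then xS n x!(j-1) else col n x t1 t2 (Suc i) j) = ((col n x t1 t2 i j \<noteq> ((i,j)=t1)) \<noteq> ((i,j)=t2))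
        \<and> (((i,j)=t1 \<or> (i,j)=t2) \<longrightarrow> col n x t1 t2 i j = ((i,j)=t2))
     then sg n x t1 t2 i j else 0)"
proof -
  have "vertex_val n A x (Ycan n A x t1 t2) i j =
    (if eedge n x (Ycan n A x t1 t2) i j = wedge n x (Ycan n A x t1 t2) i j \<and> sedge n x (Ycan n A x t1 t2) i j = ((nedge n x (Ycan n A x t1 t2) i j \<noteq> ((i,j)=t1)) \<noteq> ((i,j)=t2))
        \<and> (((i,j)=t1 \<or> (i,j)=t2) \<longrightarrow> nedge n x (Ycan n A x t1 t2) i j = ((i,j)=t2))
     then (if wedge n x (Ycan n A x t1 t2) i j \<and> nedge n x (Ycan n A x t1 t2) i j \<and> (i,j) \<noteq> t1 \<and> (i,j) \<noteq> t2 then -1 else 1) else 0)"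
    by (rule vv_eq) (auto simp: ycan_ap t)
  then show ?thesis unfolding ycan_edges[OF hA t ij] sg_def by simp
qed

lemma prod_grid_zero:
  assumes "i \<in> {1..n::nat}" "j \<in> {1..n}" "f i j = (0::int)"
  shows "(\<Prod>i\<in>{1..n}. \<Prod>j\<in>{1..n}. f i j) = 0"
proof -
  have "prod (f i) {1..n} = 0" by (metis assms(2,3) finite_atLeastAtMost prod_zero_iff)
  then show ?thesis by (metis assms(1) finite_atLeastAtMost prod_zero_iff)
qed

lemma FF_eq:
  assumes hA: "A \<subseteq> {1..n}\<times>{1..n}" and t: "t1 \<in> A" "t2 \<in> A"
  shows "FF n A x t1 t2 = (if Valid n x t1 t2 then (\<Prod>i\<in>{1..n}. \<Prod>j\<in>{1..n}. sg n x t1 t2 i j) else 0)"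
proof (cases "Valid n x t1 t2")
  case True
  have "vertex_val n A x (Ycan n A x t1 t2) i j = sg n x t1 t2 i j" if ij: "i \<in> {1..n}" "j \<in> {1..n}" for i j
  proof -
    have a: "(if j = n then xE n x!(i-1) else xW n x!(i-1)) = xW n x!(i-1)"
      using True ij by (simp add: Valid_def)
    have b: "(if i = n then xS n x!(j-1) else col n x t1 t2 (Suc i) j) = ((col n x t1 t2 i j \<noteq> ((i,j)=t1)) \<noteq> ((i,j)=t2))"
    proof (cases "i = n")
      case True2: True
      have cs: "col n x t1 t2 (Suc n) j = ((col n x t1 t2 n j \<noteq> ((n,j)=t1)) \<noteq> ((n,j)=t2))" by (rule col_step)
      have "xS n x!(j-1) = col n x t1 t2 (Suc n) j" using True ij by (simp add: Valid_def)
      then show ?thesis using True2 cs by simp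
    next
      case False
      then show ?thesis by (simp add: col_step)
    qed
    have c: "(((i,j)=t1 \<or> (i,j)=t2) \<longrightarrow> col n x t1 t2 i j = ((i,j)=t2))"
      using True by (auto simp: Valid_def)
    show ?thesis unfolding vv_ycan[OF hA t ij] using a b c by simp
  qed
  then show ?thesis using True by (simp add: FF_def)
next
  case False
  have t1g: "fst t1 \<in> {1..n}" "snd t1 \<in> {1..n}" using subsetD[OF hA t(1)] by (auto simp: mem_Times_iff)
  have t2g: "fst t2 \<in> {1..n}" "snd t2 \<in> {1..n}" using subsetD[OF hA t(2)] by (auto simp: mem_Times_iff)
  have "\<exists>i\<in>{1..n}. \<exists>j\<in>{1..n}. vertex_val n A x (Ycan n A x t1 t2) i j = 0"
  proof -
    consider (E) i where "i \<in> {1..n}" "xE n x!(i-1) \<noteq> xW n x!(i-1)"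
      | (S) j where "j \<in> {1..n}" "xS n x!(j-1) \<noteq> col n x t1 t2 (Suc n) j"
      | (T1) "t1 \<noteq> t2" "col n x t1 t2 (fst t1) (snd t1)"
      | (T2) "t1 \<noteq> t2" "\<not> col n x t1 t2 (fst t2) (snd t2)"
      | (T) "t1 = t2" "\<not> col n x t1 t2 (fst t1) (snd t1)"
      using False unfolding Valid_def by blast
    then show ?thesis
    proof cases
      case (E i)
      have nn: "n \<in> {1..n}" using E by auto
      show ?thesis by (rule bexI[of _ i], rule bexI[of _ n]) (use E nn in \<open>simp_all add: vv_ycan[OF hA t]\<close>)
    next
      case (S j)
      have nn: "n \<in> {1..n}" using S by auto
      show ?thesis by (rule bexI[of _ n], rule bexI[of _ j]) (use S nn in \<open>auto simp add: vv_ycan[OF hA t] col_step\<close>)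
    next
      case T1
      show ?thesis by (rule bexI[of _ "fst t1"], rule bexI[of _ "snd t1"]) (use t1g T1 in \<open>simp_all add: vv_ycan[OF hA t]\<close>)
    next
      case T2
      show ?thesis by (rule bexI[of _ "fst t2"], rule bexI[of _ "snd t2"]) (use t2g T2 in \<open>simp_all add: vv_ycan[OF hA t]\<close>)
    next
      case T
      have "vertex_val n A x (Ycan n A x t1 t2) (fst t1) (snd t1) = 0"
        unfolding vv_ycan[OF hA t t1g] using T by simp
      then show ?thesis using t1g by blast
    qed
  qed
  then show ?thesis using False unfolding FF_def by (auto intro: prod_grid_zero)
qed



lemma hw_card: "hw l = card {i. i < length l \<and> l!i}"
  by (simp add: hw_def length_filter_conv_card)

lemma hw1_char:
  assumes "length l = n" "hw l = 1"
  shows "onepos l \<in> {1..n} \<and> (\<forall>j\<in>{1..n}. l!(j-1) = (j = onepos l))"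
proof -
  have "card {i. i < n \<and> l!i} = 1" using assms by (simp add: hw_card)
  then obtain k where K: "{i. i < n \<and> l!i} = {k}" by (rule card_1_singletonE)
  then have k: "k < n" "l!k" by auto
  have "(LEAST i. i < length l \<and> l ! i) = k"
  proof (rule Least_equality)
    show "k < length l \<and> l ! k" using k assms by simp
  next
    fix y assume "y < length l \<and> l ! y"
    then have "y \<in> {i. i < n \<and> l!i}" using assms by simp
    then show "k \<le> y" using K by simp
  qed
  then have op: "onepos l = Suc k" by (simp add: onepos_def)
  have "l!(j-1) = (j = onepos l)" if "j \<in> {1..n}" for j
  proof -
    have "l!(j-1) \<longleftrightarrow> (j-1) \<in> {i. i < n \<and> l!i}" using that by auto
    also have "\<dots> \<longleftrightarrow> j - 1 = k" using K by simp
    also have "\<dots> \<longleftrightarrow> j = onepos l" using that op by auto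
    finally show ?thesis .
  qed
  then show ?thesis using op k by auto
qed

lemma hw1_intro:
  assumes "length l = n" "w \<in> {1..n}" "\<forall>j\<in>{1..n}. l!(j-1) = (j = w)"
  shows "hw l = 1"
proof -
  have "{i. i < n \<and> l!i} = {w-1}"
  proof (intro set_eqI iffI)
    fix i assume "i \<in> {i. i < n \<and> l!i}"
    then have "i < n" "l!(Suc i - 1)" by auto
    then have "Suc i = w" using assms(3) by (metis atLeastAtMost_iff Suc_leI le_add1 plus_1_eq_Suc less_eq_Suc_le)
    then show "i \<in> {w-1}" by simp
  next
    fix i assume "i \<in> {w-1}"
    then show "i \<in> {i. i < n \<and> l!i}" using assms(2,3) by auto
  qed
  then show ?thesis using assms(1) by (simp add: hw_card)
qed

lemma list_eq_n:
  assumes "length l1 = n" "length l2 = n" "\<forall>j\<in>{1..n}. l1!(j-1) = l2!(j-1)"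
  shows "l1 = l2"
proof (rule nth_equalityI)
  show "length l1 = length l2" using assms by simp
next
  fix i assume "i < length l1"
  then have "Suc i \<in> {1..n}" using assms by auto
  then show "l1!i = l2!i" using assms(3) by fastforce
qed

lemma len_blocks:
  assumes "length x = 4*n"
  shows "length (xN n x) = n" "length (xE n x) = n" "length (xS n x) = n" "length (xW n x) = n"
  using assms by (simp_all add: xN_def xE_def xS_def xW_def)

lemma col_N:
  assumes "\<forall>j\<in>{1..n}. xN n x!(j-1) = (j = v)" "j \<in> {1..n}"
  shows "col n x t1 t2 i j = (((j=v) \<noteq> (snd t1 = j \<and> fst t1 < i)) \<noteq> (snd t2 = j \<and> fst t2 < i))"
  using assms by (simp add: col_def)

lemma prod_one:
  assumes "finite S" "v \<in> S" "\<forall>j\<in>S. j \<noteq> v \<longrightarrow> f j = (1::int)"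
  shows "prod f S = f v"
proof -
  have "prod f S = f v * prod f (S - {v})" using assms by (simp add: prod.remove)
  moreover have "prod f (S - {v}) = 1" using assms by (intro prod.neutral) auto
  ultimately show ?thesis by simp
qed

lemma prod_two:
  assumes "finite S" "v \<in> S" "w \<in> S" "v \<noteq> w" "\<forall>j\<in>S. j \<noteq> v \<and> j \<noteq> w \<longrightarrow> f j = (1::int)"
  shows "prod f S = f v * f w"
proof -
  have "prod f S = f v * prod f (S - {v})" using assms by (simp add: prod.remove)
  moreover have "prod f (S - {v}) = f w" by (rule prod_one) (use assms in auto)
  ultimately show ?thesis by simp
qed

lemma prod_rows:
  assumes "u \<in> {1..n}" "\<forall>i\<in>{1..n}. xW n x!(i-1) = (i = u)"
  shows "(\<Prod>i\<in>{1..n}. \<Prod>j\<in>{1..n}. sg n x t1 t2 i j) = (\<Prod>j\<in>{1..n}. sg n x t1 t2 u j)"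
proof (rule prod_one)
  show "\<forall>i\<in>{1..n}. i \<noteq> u \<longrightarrow> (\<Prod>j\<in>{1..n}. sg n x t1 t2 i j) = 1"
    using assms by (auto simp: sg_def intro!: prod.neutral)
qed (use assms in auto)



lemma scen3:
  assumes hA: "A \<subseteq> {1..n}\<times>{1..n}" and t: "t1\<in>A" "t2\<in>A"
    and uvw: "u\<in>{1..n}" "v\<in>{1..n}" "w\<in>{1..n}" "v\<noteq>w"
    and hN: "\<forall>j\<in>{1..n}. xN n x!(j-1) = (j=v)" and hW: "\<forall>i\<in>{1..n}. xW n x!(i-1) = (i=u)"
    and hE: "\<forall>i\<in>{1..n}. xE n x!(i-1) = (i=u)" and hS: "\<forall>j\<in>{1..n}. xS n x!(j-1) = (j=w)"
  shows "FF n A x t1 t2 = (if snd t1 = w then (if fst t1 < u then -1 else 1) else 0)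
           * (if snd t2 = v then (if u < fst t2 then -1 else 1) else 0)"
proof -
  obtain a b where t1: "t1 = (a,b)" by fastforce
  obtain c d where t2: "t2 = (c,d)" by fastforce
  have g: "a\<in>{1..n}" "b\<in>{1..n}" "c\<in>{1..n}" "d\<in>{1..n}" using subsetD[OF hA t(1)] subsetD[OF hA t(2)] t1 t2 by auto
  have cN: "col n x t1 t2 i j = (((j=v) \<noteq> (b = j \<and> a < i)) \<noteq> (d = j \<and> c < i))" if "j\<in>{1..n}" for i j
    using col_N[OF hN that] t1 t2 by simp
  have VE: "Valid n x t1 t2 \<longleftrightarrow> (b = w \<and> d = v)"
  proof
    assume V: "Valid n x t1 t2"
    have "xS n x!(w-1) = col n x t1 t2 (Suc n) w" "xS n x!(v-1) = col n x t1 t2 (Suc n) v"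
      using V uvw by (auto simp: Valid_def)
    then have e: "(b = w) \<noteq> (d = w)" "(b = v) \<noteq> (d = v)"
      using hS uvw cN[of w "Suc n"] cN[of v "Suc n"] g by auto
    have ct: "t1 \<noteq> t2 \<longrightarrow> \<not> col n x t1 t2 a b" using V t1 by (simp add: Valid_def)
    show "b = w \<and> d = v"
    proof (rule ccontr)
      assume "\<not> (b = w \<and> d = v)"
      then have "b = v" "d = w" using e uvw(4) by auto
      then have "t1 \<noteq> t2" "col n x t1 t2 a b" using t1 t2 uvw(4) cN[of b a] g by auto
      then show False using ct by simp
    qed
  next
    assume bd: "b = w \<and> d = v"
    show "Valid n x t1 t2" unfolding Valid_def
      using bd hE hW hS uvw g cN t1 t2 by auto
  qed
  show ?thesis
  proof (cases "b = w \<and> d = v")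
    case True
    have "FF n A x t1 t2 = (\<Prod>j\<in>{1..n}. sg n x t1 t2 u j)"
      using FF_eq[OF hA t] VE True prod_rows[OF uvw(1) hW] by simp
    also have "\<dots> = sg n x t1 t2 u v * sg n x t1 t2 u w"
    proof (rule prod_two)
      show "\<forall>j\<in>{1..n}. j \<noteq> v \<and> j \<noteq> w \<longrightarrow> sg n x t1 t2 u j = 1"
        using True cN by (auto simp: sg_def)
    qed (use uvw in auto)
    also have "\<dots> = (if u < c then -1 else 1) * (if a < u then -1 else 1)"
      using True cN[of v u] cN[of w u] uvw hW t1 t2 by (auto simp: sg_def)
    finally show ?thesis using True t1 t2 by simp
  next
    case False
    then show ?thesis using FF_eq[OF hA t] VE t1 t2 by auto
  qed
qed



definition HH :: "nat \<Rightarrow> nat \<Rightarrow> nat \<Rightarrow> nat \<Rightarrow> nat \<Rightarrow> int" where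
 "HH u v j a c = (if j = v then (if a = c then (if a = u then 1 else -1) else if c < a then (if c \<le> u \<and> u \<le> a then 1 else -1) else 0)
     else (if a < c then (if a < u \<and> u < c then 1 else -1) else 0))"

lemma scen2:
  assumes hA: "A \<subseteq> {1..n}\<times>{1..n}" and t: "t1\<in>A" "t2\<in>A"
    and uv: "u\<in>{1..n}" "v\<in>{1..n}"
    and hN: "\<forall>j\<in>{1..n}. xN n x!(j-1) = (j=v)" and hW: "\<forall>i\<in>{1..n}. xW n x!(i-1) = (i=u)"
    and hE: "\<forall>i\<in>{1..n}. xE n x!(i-1) = (i=u)" and hS: "\<forall>j\<in>{1..n}. xS n x!(j-1) = (j=v)"
  shows "FF n A x t1 t2 = (if snd t1 = snd t2 then HH u v (snd t1) (fst t1) (fst t2) else 0)"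
proof -
  obtain a b where t1: "t1 = (a,b)" by fastforce
  obtain c d where t2: "t2 = (c,d)" by fastforce
  have g: "a\<in>{1..n}" "b\<in>{1..n}" "c\<in>{1..n}" "d\<in>{1..n}" using subsetD[OF hA t(1)] subsetD[OF hA t(2)] t1 t2 by auto
  have cN: "col n x t1 t2 i j = (((j=v) \<noteq> (b = j \<and> a < i)) \<noteq> (d = j \<and> c < i))" if "j\<in>{1..n}" for i j
    using col_N[OF hN that] t1 t2 by simp
  have VE: "Valid n x t1 t2 \<longleftrightarrow> b = d \<and> (if a = c then b = v else if b = v then c < a else a < c)"
  proof
    assume V: "Valid n x t1 t2"
    have "xS n x!(b-1) = col n x t1 t2 (Suc n) b"
      using V g by (auto simp: Valid_def)
    then have bd: "b = d" using hS g cN[of b "Suc n"] by auto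
    have ct: "t1 \<noteq> t2 \<longrightarrow> \<not> col n x t1 t2 a b \<and> col n x t1 t2 c d" "t1 = t2 \<longrightarrow> col n x t1 t2 a b"
      using V t1 t2 by (simp_all add: Valid_def)
    show "b = d \<and> (if a = c then b = v else if b = v then c < a else a < c)"
      using ct bd cN[of b a] cN[of d c] g t1 t2 by (auto split: if_splits)
  next
    assume bd: "b = d \<and> (if a = c then b = v else if b = v then c < a else a < c)"
    show "Valid n x t1 t2" unfolding Valid_def
      using bd hE hW hS uv g cN t1 t2 by (auto split: if_splits)
  qed
  show ?thesis
  proof (cases "Valid n x t1 t2")
    case True
    have FFp: "FF n A x t1 t2 = (\<Prod>j\<in>{1..n}. sg n x t1 t2 u j)"
      using FF_eq[OF hA t] True prod_rows[OF uv(1) hW] by simp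
    consider (same) "b = d" "a = c" "b = v" | (colv) "b = d" "a \<noteq> c" "b = v" "c < a"
      | (colo) "b = d" "a \<noteq> c" "b \<noteq> v" "a < c"
      using True VE by (auto split: if_splits)
    then show ?thesis
    proof cases
      case same
      have "FF n A x t1 t2 = sg n x t1 t2 u v"
        unfolding FFp
      proof (rule prod_one)
        show "\<forall>j\<in>{1..n}. j \<noteq> v \<longrightarrow> sg n x t1 t2 u j = 1"
          using same cN by (auto simp: sg_def)
      qed (use uv in auto)
      also have "\<dots> = (if a = u then 1 else -1)"
        using same cN[of v u] uv hW t1 t2 by (auto simp: sg_def)
      finally show ?thesis using same t1 t2 by (simp add: HH_def)
    next
      case colv
      have "FF n A x t1 t2 = sg n x t1 t2 u v"
        unfolding FFp
      proof (rule prod_one)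
        show "\<forall>j\<in>{1..n}. j \<noteq> v \<longrightarrow> sg n x t1 t2 u j = 1"
          using colv cN by (auto simp: sg_def)
      qed (use uv in auto)
      also have "\<dots> = (if c \<le> u \<and> u \<le> a then 1 else -1)"
        using colv cN[of v u] uv hW t1 t2 by (auto simp: sg_def)
      finally show ?thesis using colv t1 t2 by (simp add: HH_def)
    next
      case colo
      have "FF n A x t1 t2 = sg n x t1 t2 u v * sg n x t1 t2 u b"
        unfolding FFp
      proof (rule prod_two)
        show "\<forall>j\<in>{1..n}. j \<noteq> v \<and> j \<noteq> b \<longrightarrow> sg n x t1 t2 u j = 1"
          using colo cN by (auto simp: sg_def)
      qed (use uv g colo in auto)
      also have "\<dots> = - (if a < u \<and> u < c then -1 else 1)"
        using colo cN[of v u] cN[of b u] uv g hW t1 t2 by (auto simp: sg_def)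
      finally show ?thesis using colo t1 t2 by (simp add: HH_def)
    qed
  next
    case False
    then show ?thesis using FF_eq[OF hA t] VE t1 t2 by (auto simp: HH_def split: if_splits)
  qed
qed



lemma choose2_int: "int (k choose 2) * 2 = int k * (int k - 1)"
proof (induction k)
  case 0 then show ?case by simp
next
  case (Suc k)
  have "Suc k choose 2 = (k choose 1) + (k choose 2)" by (simp add: numeral_2_eq_2)
  then show ?case using Suc by (simp add: algebra_simps)
qed

definition II :: "bool \<Rightarrow> int" where "II P = (if P then 1 else 0)"

definition CC :: "nat \<Rightarrow> (nat\<times>nat) set \<Rightarrow> nat \<Rightarrow> nat set" where
  "CC n A j = {k\<in>{1..n}. (k,j)\<in>A}"

lemma finite_CC[simp]: "finite (CC n A j)" by (simp add: CC_def)

lemma II_sum: "finite C \<Longrightarrow> (\<Sum>k\<in>C. II (P k)) = int (card {k\<in>C. P k})"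
  by (simp add: II_def sum.inter_filter[symmetric])

lemma colsum:
  assumes hA: "A \<subseteq> {1..n}\<times>{1..n}"
  shows "(\<Sum>t\<in>A. if snd t = j then f t else 0) = (\<Sum>k\<in>CC n A j. f (k,j))"
proof -
  have fA: "finite A" using hA finite_subset by blast
  have "(\<Sum>t\<in>A. if snd t = j then f t else 0) = (\<Sum>t\<in>{t\<in>A. snd t = j}. f t)"
    using fA by (simp add: sum.inter_filter)
  also have "{t\<in>A. snd t = j} = (\<lambda>k. (k,j)) ` CC n A j" using hA by (auto simp: CC_def image_iff)
  also have "sum f \<dots> = (\<Sum>k\<in>CC n A j. f (k,j))" by (subst sum.reindex) (auto simp: inj_on_def)
  finally show ?thesis .
qed

lemma decomp:
  assumes hA: "A \<subseteq> {1..n}\<times>{1..n}"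
  shows "(\<Sum>t\<in>A. f t) = (\<Sum>j\<in>{1..n}. \<Sum>k\<in>CC n A j. f (k,j))"
proof -
  have fA: "finite A" using hA finite_subset by blast
  have "(\<Sum>t\<in>A. f t) = (\<Sum>t\<in>A. \<Sum>j\<in>{1..n}. if snd t = j then f t else 0)"
  proof (rule sum.cong)
    fix t assume "t \<in> A"
    then have "snd t \<in> {1..n}" using hA by auto
    then show "f t = (\<Sum>j\<in>{1..n}. if snd t = j then f t else 0)" by (simp add: sum.delta)
  qed simp
  also have "\<dots> = (\<Sum>j\<in>{1..n}. \<Sum>t\<in>A. if snd t = j then f t else 0)" by (rule sum.swap)
  also have "\<dots> = (\<Sum>j\<in>{1..n}. \<Sum>k\<in>CC n A j. f (k,j))" by (intro sum.cong refl colsum[OF hA])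
  finally show ?thesis .
qed

lemma alpha_sum:
  assumes "u \<in> {1..n}"
  shows "(\<Sum>k\<in>CC n A j. II (k < u)) = alpha n A u j"
proof -
  have "{k\<in>CC n A j. k < u} = {k \<in> {1..<u}. (k,j) \<in> A}" using assms by (auto simp: CC_def)
  then show ?thesis by (simp add: II_sum alpha_def)
qed

lemma beta_sum:
  assumes "u \<in> {1..n}"
  shows "(\<Sum>k\<in>CC n A j. II (u < k)) = beta n A u j"
proof -
  have "{k\<in>CC n A j. u < k} = {k \<in> {u<..n}. (k,j) \<in> A}" using assms by (auto simp: CC_def)
  then show ?thesis by (simp add: II_sum beta_def)
qed

lemma m_sum:
  assumes "u \<in> {1..n}"
  shows "(\<Sum>k\<in>CC n A j. II (k = u)) = II ((u,j) \<in> A)"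
  using assms by (simp add: II_def CC_def sum.delta')

lemma card_sum:
  assumes "u \<in> {1..n}"
  shows "int (card (CC n A j)) = alpha n A u j + beta n A u j + II ((u,j) \<in> A)"
proof -
  have "(\<Sum>k\<in>CC n A j. II (k < u) + II (u < k) + II (k = u)) = (\<Sum>k\<in>CC n A j. 1)"
    by (intro sum.cong refl) (auto simp: II_def)
  then have "int (card (CC n A j)) = (\<Sum>k\<in>CC n A j. II (k < u) + II (u < k) + II (k = u))" by simp
  also have "\<dots> = alpha n A u j + beta n A u j + II ((u,j) \<in> A)"
    using assms by (simp add: sum.distrib alpha_sum beta_sum m_sum)
  finally show ?thesis .
qed

lemma pairs_sum:
  assumes "finite C"
  shows "2 * (\<Sum>a\<in>C. \<Sum>c\<in>C. II (a < (c::nat))) = int (card C) * int (card C) - int (card C)"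
proof -
  have s: "(\<Sum>a\<in>C. \<Sum>c\<in>C. II (c < a)) = (\<Sum>a\<in>C. \<Sum>c\<in>C. II (a < c))" by (rule sum.swap)
  have d: "(\<Sum>a\<in>C. \<Sum>c\<in>C. II (a = c)) = int (card C)"
    using assms by (simp add: II_def sum.delta)
  have "(\<Sum>a\<in>C. \<Sum>c\<in>C. II (a < c) + II (c < a) + II (a = c)) = int (card C) * int (card C)"
  proof -
    have "(\<Sum>a\<in>C. \<Sum>c\<in>C. II (a < c) + II (c < a) + II (a = c)) = (\<Sum>a\<in>C. \<Sum>c\<in>C. 1)"
      by (intro sum.cong refl) (auto simp: II_def)
    then show ?thesis by simp
  qed
  then show ?thesis using s d by (simp add: sum.distrib)
qed



lemma II_01: "II P = 0 \<or> II P = 1" by (simp add: II_def)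
lemma II_sq: "II P * II P = II P" by (simp add: II_def)

lemma sum_prod2: "(\<Sum>a\<in>C. \<Sum>c\<in>C. f a * g c) = (\<Sum>a\<in>C. f a) * (\<Sum>c\<in>C. (g c::int))"
  by (simp add: sum_product)

lemma alpha_choose: "int (nat (alpha n A u j) choose 2) * 2 = alpha n A u j * (alpha n A u j - 1)"
  by (simp add: alpha_def choose2_int)
lemma beta_choose: "int (nat (beta n A u j) choose 2) * 2 = beta n A u j * (beta n A u j - 1)"
  by (simp add: beta_def choose2_int)

lemma colval_other:
  assumes u: "u \<in> {1..n}" and j: "j \<noteq> v"
  shows "(\<Sum>a\<in>CC n A j. \<Sum>c\<in>CC n A j. HH u v j a c) =
     alpha n A u j * beta n A u j - int (nat (alpha n A u j) choose 2) - int (nat (beta n A u j) choose 2)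
     - II ((u,j)\<in>A) * (alpha n A u j + beta n A u j)"
proof -
  let ?C = "CC n A j"
  let ?a = "alpha n A u j" and ?b = "beta n A u j" and ?m = "II ((u,j)\<in>A)"
  let ?P = "\<Sum>a\<in>?C. \<Sum>c\<in>?C. II (a < c)"
  have pw: "HH u v j a c = 2 * (II (a < u) * II (u < c)) - II (a < c)" for a c
    using j by (auto simp: HH_def II_def)
  have "(\<Sum>a\<in>?C. \<Sum>c\<in>?C. HH u v j a c) = (\<Sum>a\<in>?C. \<Sum>c\<in>?C. 2 * (II (a < u) * II (u < c))) - ?P"
    unfolding pw by (simp add: sum_subtractf)
  also have "(\<Sum>a\<in>?C. \<Sum>c\<in>?C. 2 * (II (a < u) * II (u < c))) = 2 * (\<Sum>a\<in>?C. \<Sum>c\<in>?C. II (a < u) * II (u < c))"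
    by (simp only: sum_distrib_left)
  also have "\<dots> = 2 * ((\<Sum>a\<in>?C. II (a < u)) * (\<Sum>c\<in>?C. II (u < c)))"
    by (simp only: sum_prod2)
  also have "\<dots> = 2 * (?a * ?b)" using u by (simp add: alpha_sum beta_sum)
  finally have S: "(\<Sum>a\<in>?C. \<Sum>c\<in>?C. HH u v j a c) = 2 * (?a * ?b) - ?P" .
  have P2: "2 * ?P = int (card ?C) * int (card ?C) - int (card ?C)" by (rule pairs_sum) simp
  have c: "int (card ?C) = ?a + ?b + ?m" by (rule card_sum[OF u])
  have X: "int (nat ?a choose 2) * 2 = ?a * (?a - 1)" by (rule alpha_choose)
  have Y: "int (nat ?b choose 2) * 2 = ?b * (?b - 1)" by (rule beta_choose)
  have m2: "?m * ?m = ?m" by (rule II_sq)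
  define a b m P X' Y' where "a = ?a" "b = ?b" "m = ?m" "P = ?P" "X' = int (nat ?a choose 2)" "Y' = int (nat ?b choose 2)"
  have "2 * (2 * (a * b) - P) = 2 * (a * b - X' - Y' - m * (a + b))"
  proof -
    have "2 * P = (a+b+m)*(a+b+m) - (a+b+m)" using P2 c by (simp add: a_b_m_P_X'_Y'_def)
    moreover have "X' * 2 = a * (a - 1)" "Y' * 2 = b * (b - 1)" "m * m = m" using X Y m2 by (simp_all add: a_b_m_P_X'_Y'_def)
    ultimately show ?thesis by (simp add: algebra_simps)
  qed
  then show ?thesis using S by (simp add: a_b_m_P_X'_Y'_def)
qed



lemma colval_v:
  assumes u: "u \<in> {1..n}"
  shows "(\<Sum>a\<in>CC n A v. \<Sum>c\<in>CC n A v. HH u v v a c) =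
     alpha n A u v * beta n A u v - int (nat (alpha n A u v) choose 2) - int (nat (beta n A u v) choose 2)
     + II ((u,v)\<in>A) * (alpha n A u v + beta n A u v) + II ((u,v)\<in>A) - alpha n A u v - beta n A u v"
proof -
  let ?C = "CC n A v"
  let ?a = "alpha n A u v" and ?b = "beta n A u v" and ?m = "II ((u,v)\<in>A)"
  let ?P = "\<Sum>a\<in>?C. \<Sum>c\<in>?C. II (a < c)"
  have pw: "HH u v v a c = 2 * (II (a = c) * II (a = u)) - II (a = c) + 2 * (II (u \<le> a) * II (c \<le> u))
      - 2 * (II (a = u) * II (c = u)) - II (c < a)" for a c
    by (auto simp: HH_def II_def)
  have T1: "(\<Sum>a\<in>?C. \<Sum>c\<in>?C. II (a = c) * II (a = u)) = ?m"
  proof -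
    have "(\<Sum>a\<in>?C. \<Sum>c\<in>?C. II (a = c) * II (a = u)) = (\<Sum>a\<in>?C. II (a = u))"
    proof (rule sum.cong[OF refl])
      fix a assume "a \<in> ?C"
      have "(\<Sum>c\<in>?C. II (a = c) * II (a = u)) = (\<Sum>c\<in>?C. if a = c then II (a = u) else 0)"
        by (intro sum.cong refl) (simp add: II_def)
      then show "(\<Sum>c\<in>?C. II (a = c) * II (a = u)) = II (a = u)" using \<open>a \<in> ?C\<close> by (simp add: sum.delta)
    qed
    then show ?thesis using m_sum[OF u] by simp
  qed
  have T2: "(\<Sum>a\<in>?C. \<Sum>c\<in>?C. II (a = c)) = int (card ?C)"
    by (simp add: II_def sum.delta)
  have T3: "(\<Sum>a\<in>?C. \<Sum>c\<in>?C. II (u \<le> a) * II (c \<le> u)) = (?b + ?m) * (?a + ?m)"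
  proof -
    have "(\<Sum>a\<in>?C. \<Sum>c\<in>?C. II (u \<le> a) * II (c \<le> u)) = (\<Sum>a\<in>?C. II (u \<le> a)) * (\<Sum>c\<in>?C. II (c \<le> u))"
      by (rule sum_prod2)
    moreover have "(\<Sum>a\<in>?C. II (u \<le> a)) = (\<Sum>a\<in>?C. II (u < a) + II (a = u))"
      by (intro sum.cong refl) (auto simp: II_def)
    moreover have "(\<Sum>c\<in>?C. II (c \<le> u)) = (\<Sum>c\<in>?C. II (c < u) + II (c = u))"
      by (intro sum.cong refl) (auto simp: II_def)
    ultimately show ?thesis using u by (simp add: sum.distrib alpha_sum beta_sum m_sum)
  qed
  have T4: "(\<Sum>a\<in>?C. \<Sum>c\<in>?C. II (a = u) * II (c = u)) = ?m * ?m"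
    using u by (simp add: sum_prod2 m_sum)
  have T5: "(\<Sum>a\<in>?C. \<Sum>c\<in>?C. II (c < a)) = ?P" by (rule sum.swap)
  have S: "(\<Sum>a\<in>?C. \<Sum>c\<in>?C. HH u v v a c) = 2 * ?m - int (card ?C) + 2 * ((?b + ?m) * (?a + ?m)) - 2 * (?m * ?m) - ?P"
    unfolding pw using T1 T2 T3 T4 T5
    by (simp add: sum.distrib sum_subtractf sum_distrib_left[symmetric])
  have P2: "2 * ?P = int (card ?C) * int (card ?C) - int (card ?C)" by (rule pairs_sum) simp
  have c: "int (card ?C) = ?a + ?b + ?m" by (rule card_sum[OF u])
  have X: "int (nat ?a choose 2) * 2 = ?a * (?a - 1)" by (rule alpha_choose)
  have Y: "int (nat ?b choose 2) * 2 = ?b * (?b - 1)" by (rule beta_choose)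
  have m2: "?m * ?m = ?m" by (rule II_sq)
  define a b m P X' Y' k where "a = ?a" "b = ?b" "m = ?m" "P = ?P" "X' = int (nat ?a choose 2)" "Y' = int (nat ?b choose 2)"
    "k = int (card ?C)"
  have "2 * (2 * m - k + 2 * ((b + m) * (a + m)) - 2 * (m * m) - P) = 2 * (a * b - X' - Y' + m * (a + b) + m - a - b)"
  proof -
    have "2 * P = k * k - k" "k = a + b + m" using P2 c by (simp_all add: a_b_m_P_X'_Y'_k_def)
    moreover have "X' * 2 = a * (a - 1)" "Y' * 2 = b * (b - 1)" "m * m = m" using X Y m2 by (simp_all add: a_b_m_P_X'_Y'_k_def)
    ultimately show ?thesis by (simp add: algebra_simps)
  qed
  then show ?thesis using S by (simp add: a_b_m_P_X'_Y'_k_def)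
qed



lemma colbot:
  assumes hA: "A \<subseteq> {1..n}\<times>{1..n}" and t: "t1\<in>A" "t2\<in>A" and v: "v \<in> {1..n}"
    and hN: "\<forall>j\<in>{1..n}. xN n x!(j-1) = (j=v)" and V: "Valid n x t1 t2"
  shows "\<exists>w\<in>{1..n}. \<forall>j\<in>{1..n}. col n x t1 t2 (Suc n) j = (j = w)"
proof -
  obtain a b where t1: "t1 = (a,b)" by fastforce
  obtain c d where t2: "t2 = (c,d)" by fastforce
  have g: "a\<in>{1..n}" "b\<in>{1..n}" "c\<in>{1..n}" "d\<in>{1..n}" using subsetD[OF hA t(1)] subsetD[OF hA t(2)] t1 t2 by auto
  have cN: "col n x t1 t2 i j = (((j=v) \<noteq> (b = j \<and> a < i)) \<noteq> (d = j \<and> c < i))" if "j\<in>{1..n}" for i j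
    using col_N[OF hN that] t1 t2 by simp
  have cb: "col n x t1 t2 (Suc n) j = (((j=v) \<noteq> (b = j)) \<noteq> (d = j))" if "j\<in>{1..n}" for j
    using cN[OF that, of "Suc n"] g by auto
  have ct: "t1 \<noteq> t2 \<longrightarrow> \<not> col n x t1 t2 a b \<and> col n x t1 t2 c d"
    using V t1 t2 by (simp add: Valid_def)
  show ?thesis
  proof (cases "b = d")
    case True
    then show ?thesis using cb v by auto
  next
    case False
    then have "t1 \<noteq> t2" using t1 t2 by auto
    then have "\<not> col n x t1 t2 a b" "col n x t1 t2 c d" using ct by auto
    then have "b \<noteq> v" "d = v" using cN[of b a] cN[of d c] g False by auto
    then show ?thesis using cb g False by (intro bexI[of _ b]) auto
  qed
qed

lemma sum_part3:
  assumes hA: "A \<subseteq> {1..n}\<times>{1..n}" and u: "u \<in> {1..n}"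
  shows "(\<Sum>t\<in>A. if snd t = w then (if fst t < u then -1 else 1) else (0::int)) = beta n A u w + II ((u,w)\<in>A) - alpha n A u w"
    "(\<Sum>t\<in>A. if snd t = v then (if u < fst t then -1 else 1) else (0::int)) = alpha n A u v + II ((u,v)\<in>A) - beta n A u v"
proof -
  have "(\<Sum>t\<in>A. if snd t = w then (if fst t < u then -1 else 1) else (0::int)) = (\<Sum>k\<in>CC n A w. (if k < u then -1 else 1))"
    using colsum[OF hA, of w "\<lambda>t. if fst t < u then -1 else (1::int)"] by simp
  also have "\<dots> = (\<Sum>k\<in>CC n A w. II (u < k) + II (k = u) - II (k < u))"
    by (intro sum.cong refl) (auto simp: II_def)
  also have "\<dots> = beta n A u w + II ((u,w)\<in>A) - alpha n A u w"
    using u by (simp add: sum.distrib sum_subtractf alpha_sum beta_sum m_sum)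
  finally show "(\<Sum>t\<in>A. if snd t = w then (if fst t < u then -1 else 1) else (0::int)) = beta n A u w + II ((u,w)\<in>A) - alpha n A u w" .
  have "(\<Sum>t\<in>A. if snd t = v then (if u < fst t then -1 else 1) else (0::int)) = (\<Sum>k\<in>CC n A v. (if u < k then -1 else 1))"
    using colsum[OF hA, of v "\<lambda>t. if u < fst t then -1 else (1::int)"] by simp
  also have "\<dots> = (\<Sum>k\<in>CC n A v. II (k < u) + II (k = u) - II (u < k))"
    by (intro sum.cong refl) (auto simp: II_def)
  also have "\<dots> = alpha n A u v + II ((u,v)\<in>A) - beta n A u v"
    using u by (simp add: sum.distrib sum_subtractf alpha_sum beta_sum m_sum)
  finally show "(\<Sum>t\<in>A. if snd t = v then (if u < fst t then -1 else 1) else (0::int)) = alpha n A u v + II ((u,v)\<in>A) - beta n A u v" .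
qed

lemma sum_part2:
  assumes hA: "A \<subseteq> {1..n}\<times>{1..n}" and u: "u \<in> {1..n}" and v: "v \<in> {1..n}"
  shows "(\<Sum>t1\<in>A. \<Sum>t2\<in>A. if snd t2 = snd t1 then HH u v (snd t1) (fst t1) (fst t2) else 0)
     = qq n A u - rr n A u v - ss n A u v
       + (if (u,v) \<in> A then 1 else - alpha n A u v - beta n A u v)"
proof -
  define Q where "Q j = alpha n A u j * beta n A u j - int (nat (alpha n A u j) choose 2) - int (nat (beta n A u j) choose 2)" for j
  define Y where "Y j = II ((u,j)\<in>A) * (alpha n A u j + beta n A u j)" for j
  have "(\<Sum>t1\<in>A. \<Sum>t2\<in>A. if snd t2 = snd t1 then HH u v (snd t1) (fst t1) (fst t2) else 0)
      = (\<Sum>t1\<in>A. \<Sum>k\<in>CC n A (snd t1). HH u v (snd t1) (fst t1) k)"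
    by (intro sum.cong refl) (rule colsum[OF hA, of "snd _" "\<lambda>t2. HH u v (snd _) (fst _) (fst t2)", simplified])
  also have "\<dots> = (\<Sum>j\<in>{1..n}. \<Sum>a\<in>CC n A j. \<Sum>k\<in>CC n A j. HH u v j a k)"
    using decomp[OF hA, of "\<lambda>t1. \<Sum>k\<in>CC n A (snd t1). HH u v (snd t1) (fst t1) k"] by simp
  also have "\<dots> = (\<Sum>j\<in>{1..n}. Q j + (if j = v then Y v + II ((u,v)\<in>A) - alpha n A u v - beta n A u v else - Y j))"
  proof (rule sum.cong[OF refl])
    fix j assume "j \<in> {1..n}"
    show "(\<Sum>a\<in>CC n A j. \<Sum>k\<in>CC n A j. HH u v j a k) = Q j + (if j = v then Y v + II ((u,v)\<in>A) - alpha n A u v - beta n A u v else - Y j)"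
    proof (cases "j = v")
      case True
      then show ?thesis using colval_v[OF u, where A=A and v=v] by (simp add: Q_def Y_def)
    next
      case False
      then show ?thesis using colval_other[OF u False, where A=A] by (simp add: Q_def Y_def)
    qed
  qed
  also have "\<dots> = qq n A u + (\<Sum>j\<in>{1..n}. if j = v then Y v + II ((u,v)\<in>A) - alpha n A u v - beta n A u v else - Y j)"
    by (simp add: sum.distrib qq_def Q_def)
  also have "(\<Sum>j\<in>{1..n}. if j = v then Y v + II ((u,v)\<in>A) - alpha n A u v - beta n A u v else - Y j)
      = (Y v + II ((u,v)\<in>A) - alpha n A u v - beta n A u v) + (\<Sum>j\<in>{1..n} - {v}. - Y j)"
    using v by (simp add: sum.remove)
  also have "(\<Sum>j\<in>{1..n} - {v}. - Y j) = - (rr n A u v + ss n A u v)"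
  proof -
    have "rr n A u v + ss n A u v = (\<Sum>z\<in>{z\<in>{1..n} - {v}. (u,z)\<in>A}. alpha n A u z + beta n A u z)"
      by (simp add: rr_def ss_def sum.distrib add.commute)
    also have "\<dots> = (\<Sum>z\<in>{1..n} - {v}. if (u,z)\<in>A then alpha n A u z + beta n A u z else 0)"
      by (rule sum.inter_filter) simp
    also have "\<dots> = (\<Sum>z\<in>{1..n} - {v}. Y z)"
      by (intro sum.cong refl) (simp add: Y_def II_def)
    finally show ?thesis by (simp add: sum_negf)
  qed
  finally show ?thesis by (simp add: Y_def II_def)
qed



theorem mainTheorem12:
  fixes n :: nat and A :: "(nat \<times> nat) set" and x :: "bool list"
  assumes hA: "A \<subseteq> {1..n} \<times> {1..n}"
    and hx: "length x = 4 * n"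
    and one: "hw (xN n x) = 1" "hw (xW n x) = 1"
  shows
    "(xW n x \<noteq> xE n x \<or> hw (xS n x) \<noteq> 1 \<longrightarrow> SigGamma n A x = 0)
   \<and> (xN n x = xS n x \<and> xW n x = xE n x \<longrightarrow>
        (let u = onepos (xW n x); v = onepos (xN n x) in
          SigGamma n A x =
            (if (u,v) \<notin> A
             then qq n A u - rr n A u v - ss n A u v - alpha n A u v - beta n A u v
             else qq n A u - rr n A u v - ss n A u v + 1)))
   \<and> (xW n x = xE n x \<and> hw (xS n x) = 1 \<and> xN n x \<noteq> xS n x \<longrightarrow>
        (let u = onepos (xW n x); v = onepos (xN n x); w = onepos (xS n x) in
          SigGamma n A x =
            (if (u,v) \<notin> A \<and> (u,w) \<notin> A then pp n A u v w
             else if (u,v) \<notin> A \<and> (u,w) \<in> A then pp n A u v w + alpha n A u v - beta n A u v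
             else if (u,v) \<in> A \<and> (u,w) \<notin> A then pp n A u v w + beta n A u w - alpha n A u w
             else pp n A u v w + beta n A u w - alpha n A u w + alpha n A u v - beta n A u v + 1)))"
proof -
  have lN: "length (xN n x) = n" and lE: "length (xE n x) = n" and lS: "length (xS n x) = n" and lW: "length (xW n x) = n"
    using len_blocks[OF hx] by simp_all
  define u where "u = onepos (xW n x)"
  define v where "v = onepos (xN n x)"
  have u: "u \<in> {1..n}" and hW: "\<forall>i\<in>{1..n}. xW n x!(i-1) = (i = u)"
    using hw1_char[OF lW one(2)] u_def by auto
  have v: "v \<in> {1..n}" and hN: "\<forall>j\<in>{1..n}. xN n x!(j-1) = (j = v)"
    using hw1_char[OF lN one(1)] v_def by auto
  have SG: "SigGamma n A x = (\<Sum>t1\<in>A. \<Sum>t2\<in>A. FF n A x t1 t2)" by (rule core[OF hA])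
  have P1: "SigGamma n A x = 0" if H: "xW n x \<noteq> xE n x \<or> hw (xS n x) \<noteq> 1"
  proof -
    have "FF n A x t1 t2 = 0" if t: "t1 \<in> A" "t2 \<in> A" for t1 t2
    proof (cases "Valid n x t1 t2")
      case True
      have "xE n x = xW n x" using True lE lW by (intro list_eq_n[of _ n]) (auto simp: Valid_def)
      moreover obtain w where w: "w \<in> {1..n}" "\<forall>j\<in>{1..n}. col n x t1 t2 (Suc n) j = (j = w)"
        using colbot[OF hA t v hN True] by blast
      then have "hw (xS n x) = 1" using True
        by (intro hw1_intro[OF lS w(1)]) (auto simp: Valid_def)
      ultimately show ?thesis using H by simp
    next
      case False
      then show ?thesis using FF_eq[OF hA t] by simp
    qed
    then show ?thesis using SG by simp
  qed
  have P2: "SigGamma n A x = (if (u,v) \<notin> A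
             then qq n A u - rr n A u v - ss n A u v - alpha n A u v - beta n A u v
             else qq n A u - rr n A u v - ss n A u v + 1)" if H: "xN n x = xS n x \<and> xW n x = xE n x"
  proof -
    have hE: "\<forall>i\<in>{1..n}. xE n x!(i-1) = (i=u)" using hW H by simp
    have hS: "\<forall>j\<in>{1..n}. xS n x!(j-1) = (j=v)" using hN H by simp
    have "SigGamma n A x = (\<Sum>t1\<in>A. \<Sum>t2\<in>A. if snd t2 = snd t1 then HH u v (snd t1) (fst t1) (fst t2) else 0)"
      unfolding SG by (intro sum.cong refl) (auto simp: scen2[OF hA _ _ u v hN hW hE hS])
    also have "\<dots> = qq n A u - rr n A u v - ss n A u v + (if (u,v) \<in> A then 1 else - alpha n A u v - beta n A u v)"
      by (rule sum_part2[OF hA u v])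
    finally show ?thesis by simp
  qed
  have P3: "SigGamma n A x =
            (if (u,v) \<notin> A \<and> (u,w) \<notin> A then pp n A u v w
             else if (u,v) \<notin> A \<and> (u,w) \<in> A then pp n A u v w + alpha n A u v - beta n A u v
             else if (u,v) \<in> A \<and> (u,w) \<notin> A then pp n A u v w + beta n A u w - alpha n A u w
             else pp n A u v w + beta n A u w - alpha n A u w + alpha n A u v - beta n A u v + 1)"
    if H: "xW n x = xE n x \<and> hw (xS n x) = 1 \<and> xN n x \<noteq> xS n x" and wd: "w = onepos (xS n x)" for w
  proof -
    have w: "w \<in> {1..n}" and hS: "\<forall>j\<in>{1..n}. xS n x!(j-1) = (j = w)"
      using hw1_char[OF lS] H wd by auto
    have hE: "\<forall>i\<in>{1..n}. xE n x!(i-1) = (i=u)" using hW H by simp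
    have vw: "v \<noteq> w"
    proof
      assume "v = w"
      then have "xN n x = xS n x" using hN hS lN lS by (intro list_eq_n[of _ n]) auto
      then show False using H by simp
    qed
    have "SigGamma n A x = (\<Sum>t1\<in>A. \<Sum>t2\<in>A. (if snd t1 = w then (if fst t1 < u then -1 else 1) else 0)
           * (if snd t2 = v then (if u < fst t2 then -1 else 1) else 0))"
      unfolding SG by (intro sum.cong refl) (auto simp: scen3[OF hA _ _ u v w vw hN hW hE hS])
    also have "\<dots> = (\<Sum>t1\<in>A. (if snd t1 = w then (if fst t1 < u then -1 else 1) else 0))
           * (\<Sum>t2\<in>A. (if snd t2 = v then (if u < fst t2 then -1 else 1) else 0))"
      by (simp add: sum_product)
    also have "\<dots> = (beta n A u w + II ((u,w)\<in>A) - alpha n A u w) * (alpha n A u v + II ((u,v)\<in>A) - beta n A u v)"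
      using sum_part3[OF hA u] by simp
    finally have F: "SigGamma n A x = (beta n A u w + II ((u,w)\<in>A) - alpha n A u w) * (alpha n A u v + II ((u,v)\<in>A) - beta n A u v)" .
    show ?thesis unfolding F by (cases "(u,v)\<in>A"; cases "(u,w)\<in>A") (simp_all add: pp_def II_def algebra_simps)
  qed
  show ?thesis
    using P1 P2 P3 by (simp add: Let_def u_def v_def)
qed

end
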